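(* Let $\sigma\subseteq N_\mathbb{Q}$ be a strongly convex rational polyhedral cone, $\tau$ a $k$-dimensional regular face of $\sigma$ with primitive ray generators $p_1,\ldots,p_k$, and let $c_1,\ldots,c_k\in\tau^\perp\cap M$ be arbitrary. Then there is a set of Demazure roots $\{e_1^{(r)},e_2^{(r)}\mid r=1,\ldots,k\}$ of $\sigma$ compatible with $\tau$ such that $e_1^{(r)}-e_2^{(r)}=c_r$ for all $r=1,\ldots,k$.
   Context: $N$ is a lattice, $M$ its dual, $\langle\cdot,\cdot\rangle$ the pairing. A face is regular if its primitive ray generators are part of a basis of $N$. If $p_1,\ldots,p_m$ are the primitive vectors on the rays of $\sigma$, a Demazure root associated with $p_i$ is an $e\in M$ with $\langle p_i,e\rangle=-1$ and $\langle p_j,e\rangle\ge0$ for all $j\ne i$. A set $\{e_1^{(r)},e_2^{(r)}\}_{r=1}^k$ of Demazure roots of $\sigma$ is compatible with $\tau$ if $\langle p_s,e_1^{(r)}\rangle=\langle p_s,e_2^{(r)}\rangle=-\delta_{rs}$ for all $r,s=1,\ldots,k$. *)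

theory Defs
  imports "HOL-Analysis.Analysis"
begin

text \<open>The lattice N is modelled as int^'n (a lattice of rank CARD('n)), its dual M
  also as int^'n, with the standard pairing. N_Q is modelled inside real^'n.\<close>

definition rvec :: "int^'n \<Rightarrow> real^'n" where
  "rvec v = (\<chi> i. real_of_int (v $ i))"

definition pairing :: "int^'n \<Rightarrow> int^'n \<Rightarrow> int" where
  "pairing p e = (\<Sum>i\<in>UNIV. p $ i * e $ i)"

definition lattice_cone :: "(int^'n) set \<Rightarrow> (real^'n) set" where
  "lattice_cone S = {\<Sum>s\<in>S. a s *\<^sub>R rvec s | a. \<forall>s\<in>S. a s \<ge> 0}"

definition rational_polyhedral_cone :: "(real^'n) set \<Rightarrow> bool" where
  "rational_polyhedral_cone \<sigma> \<longleftrightarrow> (\<exists>S. finite S \<and> \<sigma> = lattice_cone S)"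

definition strongly_convex :: "(real^'n) set \<Rightarrow> bool" where
  "strongly_convex \<sigma> \<longleftrightarrow> (\<forall>x. x \<in> \<sigma> \<and> - x \<in> \<sigma> \<longrightarrow> x = 0)"

definition primitive_vec :: "int^'n \<Rightarrow> bool" where
  "primitive_vec v \<longleftrightarrow> v \<noteq> 0 \<and> (\<forall>(k::int) w. v = k *s w \<longrightarrow> \<bar>k\<bar> = 1)"

definition ray_gens :: "(real^'n) set \<Rightarrow> (int^'n) set" where
  "ray_gens \<sigma> = {p. primitive_vec p \<and> (\<exists>F. F face_of \<sigma> \<and> aff_dim F = 1 \<and> rvec p \<in> F)}"

definition lattice_basis :: "(int^'n) set \<Rightarrow> bool" where
  "lattice_basis B \<longleftrightarrow> finite B \<and> independent (rvec ` B) \<and> inj_on rvec B \<and>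
     (\<forall>v. \<exists>a::int^'n \<Rightarrow> int. v = (\<Sum>b\<in>B. a b *s b))"

definition regular_face :: "(real^'n) set \<Rightarrow> bool" where
  "regular_face \<tau> \<longleftrightarrow> (\<exists>B. lattice_basis B \<and> ray_gens \<tau> \<subseteq> B)"

definition perp_lattice :: "(real^'n) set \<Rightarrow> (int^'n) set" where
  "perp_lattice \<tau> = {c. \<forall>x\<in>\<tau>. x \<bullet> rvec c = 0}"

definition demazure_root :: "(real^'n) set \<Rightarrow> int^'n \<Rightarrow> int^'n \<Rightarrow> bool" where
  "demazure_root \<sigma> p e \<longleftrightarrow> p \<in> ray_gens \<sigma> \<and> pairing p e = -1 \<and>
     (\<forall>q\<in>ray_gens \<sigma>. q \<noteq> p \<longrightarrow> pairing q e \<ge> 0)"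

end

theory Submission
  imports Defs
begin

lemma rvec_add: "rvec (a + b) = rvec a + rvec b"
  by (simp add: rvec_def vec_eq_iff)
lemma rvec_diff: "rvec (a - b) = rvec a - rvec b"
  by (simp add: rvec_def vec_eq_iff)
lemma rvec_smult: "rvec (k *s a) = of_int k *\<^sub>R rvec a"
  by (simp add: rvec_def vec_eq_iff)
lemma rvec_zero[simp]: "rvec 0 = 0"
  by (simp add: rvec_def vec_eq_iff)
lemma rvec_eq0: "rvec a = 0 \<longleftrightarrow> a = 0"
  by (simp add: rvec_def vec_eq_iff)
lemma rvec_sum: "rvec (\<Sum>b\<in>B. f b) = (\<Sum>b\<in>B. rvec (f b))"
  by (induction B rule: infinite_finite_induct) (auto simp: rvec_add)
lemma inj_rvec: "inj rvec"
  by (auto simp: inj_def rvec_def vec_eq_iff)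

lemma inner_rvec: "rvec p \<bullet> rvec e = real_of_int (pairing p e)"
  by (simp add: inner_vec_def rvec_def pairing_def)

lemma pairing_add2: "pairing p (a + b) = pairing p a + pairing p b"
  by (simp add: pairing_def algebra_simps sum.distrib)
lemma pairing_diff2: "pairing p (a - b) = pairing p a - pairing p b"
  by (simp add: pairing_def algebra_simps sum_subtractf)
lemma pairing_smult2: "pairing p (k *s a) = k * pairing p a"
  by (simp add: pairing_def algebra_simps sum_distrib_left)
lemma pairing_zero2[simp]: "pairing p 0 = 0"
  by (simp add: pairing_def)
lemma pairing_sum2: "pairing p (\<Sum>b\<in>B. f b) = (\<Sum>b\<in>B. pairing p (f b))"
  by (induction B rule: infinite_finite_induct) (simp_all add: pairing_add2)
lemma pairing_comm: "pairing p e = pairing e p"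
  by (simp add: pairing_def mult.commute)

lemma vec_expand: "(v::int^'n) = (\<Sum>i\<in>UNIV. v $ i *s axis i 1)"
proof -
  have "\<And>i. (\<Sum>x\<in>UNIV. v $ x * (if i = x then 1 else 0)) = v $ i"
    by (simp add: if_distrib[where f="\<lambda>t. _ * t"] cong: if_cong)
  then show ?thesis by (simp add: vec_eq_iff sum_component axis_def)
qed

lemma indep_coeffs:
  assumes lb: "lattice_basis B" and eq: "(\<Sum>b\<in>B. g b *\<^sub>R rvec b) = 0" and b0: "b0 \<in> B"
  shows "g b0 = 0"
proof -
  have fin: "finite B" and ind: "independent (rvec ` B)" and inj: "inj_on rvec B"
    using lb by (auto simp: lattice_basis_def)
  define h where "h = g \<circ> inv_into B rvec"
  have "(\<Sum>v\<in>rvec ` B. h v *\<^sub>R v) = (\<Sum>b\<in>B. g b *\<^sub>R rvec b)"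
    by (simp add: sum.reindex[OF inj] h_def inv_into_f_f[OF inj])
  then have "(\<Sum>v\<in>rvec ` B. h v *\<^sub>R v) = 0" using eq by simp
  moreover have "\<forall>S\<subseteq>rvec ` B. finite S \<longrightarrow> (\<forall>u. (\<Sum>v\<in>S. u v *\<^sub>R v) = 0 \<longrightarrow> (\<forall>v\<in>S. u v = 0))"
    using ind real_vector.independent_explicit_finite_subsets by blast
  ultimately have "h (rvec b0) = 0"
    using fin b0 by blast
  then show ?thesis by (simp add: h_def inv_into_f_f[OF inj b0])
qed

lemma dual_basis:
  assumes lb: "lattice_basis B"
  shows "\<exists>d. \<forall>b\<in>B. \<forall>b'\<in>B. pairing b' (d b) = (if b' = b then 1 else 0)"
proof -
  have "\<forall>i. \<exists>a. axis i (1::int) = (\<Sum>b\<in>B. a b *s b)"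
    using lb by (auto simp: lattice_basis_def)
  then obtain A where A: "\<And>i. axis i (1::int) = (\<Sum>b\<in>B. A i b *s b)" by metis
  define d where "d b = (\<chi> i. A i b)" for b
  have "\<forall>b\<in>B. \<forall>b'\<in>B. pairing b' (d b) = (if b' = b then 1 else 0)"
  proof (intro ballI)
    fix b b' assume b: "b \<in> B" and b': "b' \<in> B"
    have "b' = (\<Sum>i\<in>UNIV. b' $ i *s (\<Sum>c\<in>B. A i c *s c))"
      using vec_expand[of b'] by (simp add: A)
    also have "\<dots> = (\<Sum>c\<in>B. pairing b' (d c) *s c)"
    proof -
      have "\<And>j. (\<Sum>i\<in>UNIV. b' $ i * (\<Sum>c\<in>B. A i c * c $ j)) = (\<Sum>c\<in>B. (\<Sum>i\<in>UNIV. b' $ i * A i c) * c $ j)"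
        by (simp add: sum_distrib_left sum_distrib_right mult.assoc) (rule sum.swap)
      then show ?thesis
        unfolding vec_eq_iff pairing_def d_def
        by (simp only: sum_component vector_smult_component vec_lambda_beta) (simp add: mult.commute)
    qed
    finally have e1: "rvec b' = (\<Sum>c\<in>B. real_of_int (pairing b' (d c)) *\<^sub>R rvec c)"
      by (metis (no_types, lifting) rvec_smult rvec_sum sum.cong)
    have fin: "finite B" using lb by (simp add: lattice_basis_def)
    have e2: "rvec b' = (\<Sum>c\<in>B. (if c = b' then 1 else 0) *\<^sub>R rvec c)"
      using b' fin by (simp add: if_distrib[where f="\<lambda>t. t *\<^sub>R _"] cong: if_cong)
    have "(\<Sum>c\<in>B. (real_of_int (pairing b' (d c)) - (if c = b' then 1 else 0)) *\<^sub>R rvec c) = 0"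
      using e1 e2 by (simp add: scaleR_diff_left sum_subtractf)
    from indep_coeffs[OF lb this b] show "pairing b' (d b) = (if b' = b then 1 else 0)"
      by (auto split: if_splits)
  qed
  then show ?thesis by blast
qed

lemma face0:
  fixes C :: "'a::euclidean_space set"
  assumes cc: "convex_cone C" and F: "F face_of C" and x: "x \<in> F"
  shows "0 \<in> F"
proof (cases "x = 0")
  case True then show ?thesis using x by simp
next
  case False
  have xC: "x \<in> C" using F x face_of_imp_subset by blast
  have "midpoint 0 (2 *\<^sub>R x) = x" by (simp add: midpoint_def)
  moreover have "midpoint 0 (2 *\<^sub>R x) \<in> open_segment 0 (2 *\<^sub>R x)"
    using False by simp
  moreover have "0 \<in> C" "2 *\<^sub>R x \<in> C"
    using cc xC by (auto simp: convex_cone_iff)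
  ultimately show ?thesis using face_ofD[OF F] x by metis
qed

lemma face_sum:
  fixes C :: "'a::euclidean_space set"
  assumes cc: "convex_cone C" and F: "F face_of C" and y: "y \<in> C" and z: "z \<in> C"
    and yz: "y + z \<in> F"
  shows "y \<in> F"
proof -
  have 0: "0 \<in> F" using face0[OF cc F yz] .
  have cF: "convex F" using F face_of_imp_convex by blast
  have "(1/2) *\<^sub>R 0 + (1/2) *\<^sub>R (y + z) \<in> F"
    using convexD[OF cF 0 yz, of "1/2" "1/2"] by simp
  then have m: "midpoint y z \<in> F" by (simp add: midpoint_def)
  show ?thesis
  proof (cases "y = z")
    case True then show ?thesis using m by simp
  next
    case False
    then have "midpoint y z \<in> open_segment y z" by simp
    then show ?thesis using face_ofD[OF F _ y z m] by blast
  qed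
qed

lemma face_ray_sub:
  fixes C :: "'a::euclidean_space set"
  assumes cc: "convex_cone C" and F: "F face_of C" and dF: "aff_dim F = 1" and T: "T face_of C"
    and y: "y \<in> F" "y \<in> T" "y \<noteq> 0"
  shows "F \<subseteq> T"
proof (rule ccontr)
  assume nsub: "\<not> F \<subseteq> T"
  define G where "G = F \<inter> T"
  have GC: "G face_of C" using face_of_Int[OF F T] by (simp add: G_def)
  have GF: "G face_of F" using face_of_subset[OF GC] F face_of_imp_subset G_def by blast
  have yG: "y \<in> G" using y by (simp add: G_def)
  have 0: "0 \<in> G" using face0[OF cc GC yG] .
  have "aff_dim {0, y} \<le> aff_dim G" using 0 yG by (intro aff_dim_subset) auto
  then have "1 \<le> aff_dim G" using y by simp
  moreover have "G \<noteq> F" using nsub G_def by blast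
  then have "aff_dim G < aff_dim F"
    using face_of_aff_dim_lt[OF face_of_imp_convex[OF F] GF] by blast
  ultimately show False using dF by simp
qed

lemma exposed_cone:
  fixes C :: "'a::euclidean_space set"
  assumes P: "polyhedron C" and cc: "convex_cone C" and T: "T face_of C" and ne: "T \<noteq> {}"
  shows "\<exists>u. (\<forall>x\<in>C. 0 \<le> u \<bullet> x) \<and> T = {x\<in>C. u \<bullet> x = 0}"
proof -
  have "T exposed_face_of C" using exposed_face_of_polyhedron[OF P] T by blast
  then obtain a b where ab: "C \<subseteq> {x. a \<bullet> x \<le> b}" "T = C \<inter> {x. a \<bullet> x = b}"
    by (auto simp: exposed_face_of_def)
  obtain x where "x \<in> T" using ne by blast
  then have "0 \<in> T" using face0[OF cc T] by blast
  then have b: "b = 0" using ab by auto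
  show ?thesis
    by (rule exI[of _ "-a"]) (use ab b in auto)
qed

lemma convex_cone_sum:
  assumes "convex_cone C" "\<And>s. s \<in> S \<Longrightarrow> f s \<in> C"
  shows "sum f S \<in> C"
  using assms(2)
proof (induction S rule: infinite_finite_induct)
  case (infinite A) then show ?case using assms(1) by (simp add: convex_cone_iff)
next
  case empty then show ?case using assms(1) by (simp add: convex_cone_iff)
next
  case (insert x F) then show ?case using assms(1) by (simp add: convex_cone_add)
qed

lemma lattice_cone_convex_cone: "convex_cone (lattice_cone S)"
  unfolding convex_cone_iff
proof (intro conjI ballI allI impI)
  show "0 \<in> lattice_cone S"
    unfolding lattice_cone_def by (rule CollectI, rule exI[of _ "\<lambda>_. 0"]) simp
next
  fix x y assume "x \<in> lattice_cone S" "y \<in> lattice_cone S"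
  then obtain a b where a: "x = (\<Sum>s\<in>S. a s *\<^sub>R rvec s)" "\<forall>s\<in>S. a s \<ge> 0"
    and b: "y = (\<Sum>s\<in>S. b s *\<^sub>R rvec s)" "\<forall>s\<in>S. b s \<ge> 0"
    by (auto simp: lattice_cone_def)
  show "x + y \<in> lattice_cone S"
    unfolding lattice_cone_def
    by (rule CollectI, rule exI[of _ "\<lambda>s. a s + b s"]) (use a b in \<open>auto simp: scaleR_add_left sum.distrib\<close>)
next
  fix x and c :: real assume "x \<in> lattice_cone S" "0 \<le> c"
  then obtain a where a: "x = (\<Sum>s\<in>S. a s *\<^sub>R rvec s)" "\<forall>s\<in>S. a s \<ge> 0"
    by (auto simp: lattice_cone_def)
  show "c *\<^sub>R x \<in> lattice_cone S"
    unfolding lattice_cone_def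
    by (rule CollectI, rule exI[of _ "\<lambda>s. c * a s"]) (use a \<open>0 \<le> c\<close> in \<open>auto simp: scaleR_sum_right\<close>)
qed

lemma rvec_in_lattice_cone:
  assumes "finite S" "s \<in> S" shows "rvec s \<in> lattice_cone S"
  unfolding lattice_cone_def
  by (rule CollectI, rule exI[of _ "\<lambda>t. if t = s then 1 else 0"])
     (use assms in \<open>simp add: if_distrib[where f="\<lambda>t. t *\<^sub>R _"] cong: if_cong\<close>)

lemma lattice_cone_hull:
  assumes fin: "finite S"
  shows "lattice_cone S = convex_cone hull (rvec ` S)"
proof
  show "convex_cone hull (rvec ` S) \<subseteq> lattice_cone S"
    by (rule hull_minimal) (use rvec_in_lattice_cone[OF fin] lattice_cone_convex_cone in auto)
next
  show "lattice_cone S \<subseteq> convex_cone hull (rvec ` S)"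
  proof
    fix x assume "x \<in> lattice_cone S"
    then obtain a where a: "x = (\<Sum>s\<in>S. a s *\<^sub>R rvec s)" "\<forall>s\<in>S. a s \<ge> 0"
      by (auto simp: lattice_cone_def)
    show "x \<in> convex_cone hull (rvec ` S)"
      unfolding a(1)
      by (rule convex_cone_sum[OF convex_cone_convex_cone_hull])
         (use a(2) in \<open>auto intro: convex_cone_hull_mul hull_inc\<close>)
  qed
qed

lemma ray_sub: "\<tau> face_of \<sigma> \<Longrightarrow> ray_gens \<tau> \<subseteq> ray_gens \<sigma>"
  unfolding ray_gens_def using face_of_trans by blast

lemma ray_in: "p \<in> ray_gens \<tau> \<Longrightarrow> rvec p \<in> \<tau>"
  unfolding ray_gens_def using face_of_imp_subset by blast

lemma ray_back:
  assumes cc: "convex_cone \<sigma>" and T: "\<tau> face_of \<sigma>" and q: "q \<in> ray_gens \<sigma>" and qt: "rvec q \<in> \<tau>"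
  shows "q \<in> ray_gens \<tau>"
proof -
  obtain F where F: "F face_of \<sigma>" "aff_dim F = 1" "rvec q \<in> F" and pq: "primitive_vec q"
    using q by (auto simp: ray_gens_def)
  have "rvec q \<noteq> 0" using pq by (simp add: primitive_vec_def rvec_eq0)
  then have "F \<subseteq> \<tau>" using face_ray_sub[OF cc F(1,2) T F(3) qt] by blast
  then have "F face_of \<tau>" using face_of_subset[OF F(1)] T face_of_imp_subset by blast
  then show ?thesis using F pq by (auto simp: ray_gens_def)
qed

lemma nonneg_on_rays:
  fixes S :: "(int^'n) set" and u :: "real^'n"
  assumes fin: "finite S" and sig: "\<sigma> = lattice_cone S" and pos: "\<forall>x\<in>\<sigma>. 0 \<le> u \<bullet> x"
    and tau: "\<tau> = {x\<in>\<sigma>. u \<bullet> x = 0}" and T: "\<tau> face_of \<sigma>"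
    and es: "\<forall>s\<in>S. 0 < u \<bullet> rvec s \<longrightarrow> 0 \<le> pairing s e"
    and q: "q \<in> ray_gens \<sigma>" and qt: "rvec q \<notin> \<tau>"
  shows "0 \<le> pairing q e"
proof -
  have cc: "convex_cone \<sigma>" using sig lattice_cone_convex_cone by simp
  obtain F where F: "F face_of \<sigma>" "aff_dim F = 1" "rvec q \<in> F"
    using q by (auto simp: ray_gens_def)
  have "rvec q \<in> \<sigma>" using F face_of_imp_subset by blast
  then obtain a where a: "rvec q = (\<Sum>s\<in>S. a s *\<^sub>R rvec s)" "\<forall>s\<in>S. a s \<ge> 0"
    using sig by (auto simp: lattice_cone_def)
  have "real_of_int (pairing q e) = rvec q \<bullet> rvec e" by (simp add: inner_rvec)
  also have "\<dots> = (\<Sum>s\<in>S. a s * real_of_int (pairing s e))"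
    by (simp add: a(1) inner_sum_left inner_rvec)
  also have "\<dots> \<ge> 0"
  proof (rule sum_nonneg)
    fix s assume s: "s \<in> S"
    have sS: "rvec s \<in> \<sigma>" using rvec_in_lattice_cone[OF fin s] sig by simp
    show "0 \<le> a s * real_of_int (pairing s e)"
    proof (cases "0 < u \<bullet> rvec s")
      case True then show ?thesis using es s a(2) by simp
    next
      case False
      then have u0: "u \<bullet> rvec s = 0" using pos sS by force
      define y where "y = a s *\<^sub>R rvec s"
      define z where "z = (\<Sum>t\<in>S. (if t = s then 0 else a t) *\<^sub>R rvec t)"
      have yS: "y \<in> \<sigma>" using sS a(2) s cc by (simp add: y_def convex_cone_iff)
      have zS: "z \<in> \<sigma>" unfolding z_def sig lattice_cone_def
        by (rule CollectI, rule exI[of _ "\<lambda>t. if t = s then 0 else a t"]) (use a(2) in auto)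
      have "y + z = rvec q"
      proof -
        have "z = (\<Sum>t\<in>S - {s}. a t *\<^sub>R rvec t)"
          unfolding z_def by (rule sum.mono_neutral_cong_right) (use fin in auto)
        then show ?thesis unfolding y_def a(1) using sum.remove[OF fin s, of "\<lambda>t. a t *\<^sub>R rvec t"] by simp
      qed
      then have yF: "y \<in> F" using face_sum[OF cc F(1) yS zS] F(3) by simp
      have yT: "y \<in> \<tau>" using yS u0 tau by (simp add: y_def)
      have "y = 0"
      proof (rule ccontr)
        assume "y \<noteq> 0"
        then have "F \<subseteq> \<tau>" using face_ray_sub[OF cc F(1,2) T yF yT] by blast
        then show False using F(3) qt by blast
      qed
      then have "y \<bullet> rvec e = 0" by simp
      then show ?thesis by (auto simp: y_def inner_rvec)
    qed
  qed
  finally show ?thesis by simp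
qed

theorem mainTheorem4:
  fixes \<sigma> \<tau> :: "(real^'n) set" and k :: nat and c :: "int^'n \<Rightarrow> int^'n"
  assumes "rational_polyhedral_cone \<sigma>" and "strongly_convex \<sigma>"
    and "\<tau> face_of \<sigma>" and "aff_dim \<tau> = int k" and "regular_face \<tau>"
    and "\<forall>p\<in>ray_gens \<tau>. c p \<in> perp_lattice \<tau>"
  shows "\<exists>e1 e2 :: int^'n \<Rightarrow> int^'n.
    (\<forall>r\<in>ray_gens \<tau>. demazure_root \<sigma> r (e1 r) \<and> demazure_root \<sigma> r (e2 r)
        \<and> e1 r - e2 r = c r) \<and>
    (\<forall>r\<in>ray_gens \<tau>. \<forall>s\<in>ray_gens \<tau>.
        pairing s (e1 r) = (if s = r then -1 else 0) \<and>
        pairing s (e2 r) = (if s = r then -1 else 0))"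
proof -
  obtain S where fin: "finite S" and sig: "\<sigma> = lattice_cone S"
    using assms(1) by (auto simp: rational_polyhedral_cone_def)
  have cc: "convex_cone \<sigma>" using sig lattice_cone_convex_cone by simp
  have poly: "polyhedron \<sigma>"
    unfolding sig lattice_cone_hull[OF fin] by (rule polyhedron_convex_cone_hull) (simp add: fin)
  have T: "\<tau> face_of \<sigma>" by fact
  have ne: "\<tau> \<noteq> {}" using assms(4) by auto
  obtain u where pos: "\<forall>x\<in>\<sigma>. 0 \<le> u \<bullet> x" and tau: "\<tau> = {x\<in>\<sigma>. u \<bullet> x = 0}"
    using exposed_cone[OF poly cc T ne] by blast
  define P where "P = ray_gens \<tau>"
  obtain B where lb: "lattice_basis B" and PB: "P \<subseteq> B"
    using assms(5) by (auto simp: regular_face_def P_def)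
  have finB: "finite B" using lb by (simp add: lattice_basis_def)
  have finP: "finite P" using finite_subset[OF PB finB] .
  obtain d where d: "\<And>b b'. b \<in> B \<Longrightarrow> b' \<in> B \<Longrightarrow> pairing b' (d b) = (if b' = b then 1 else 0)"
    using dual_basis[OF lb] by blast
  have "\<forall>v. \<exists>a. v = (\<Sum>b\<in>B. a b *s b)" using lb by (simp add: lattice_basis_def)
  then obtain \<alpha> where \<alpha>: "\<And>v. v = (\<Sum>b\<in>B. \<alpha> v b *s b)" by metis
  have coord: "pairing v (d b0) = \<alpha> v b0" if b0: "b0 \<in> B" for v b0
  proof -
    have "pairing v (d b0) = pairing (d b0) (\<Sum>b\<in>B. \<alpha> v b *s b)"
      using \<alpha>[of v] pairing_comm by metis
    also have "\<dots> = (\<Sum>b\<in>B. \<alpha> v b * pairing b (d b0))"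
      by (simp add: pairing_sum2 pairing_smult2 pairing_comm)
    also have "\<dots> = (\<Sum>b\<in>B. if b = b0 then \<alpha> v b else 0)"
      by (rule sum.cong) (auto simp: d b0)
    also have "\<dots> = \<alpha> v b0" using finB b0 by simp
    finally show ?thesis .
  qed
  define t where "t b = u \<bullet> rvec b" for b
  have tP: "t p = 0" if "p \<in> P" for p
    using ray_in[of p \<tau>] that tau by (auto simp: t_def P_def)
  have uexp: "u \<bullet> rvec v = (\<Sum>b\<in>B. real_of_int (\<alpha> v b) * t b)" for v
  proof -
    have "rvec v = (\<Sum>b\<in>B. real_of_int (\<alpha> v b) *\<^sub>R rvec b)"
      using \<alpha>[of v] by (metis (no_types, lifting) rvec_smult rvec_sum sum.cong)
    then show ?thesis by (simp add: inner_sum_right t_def)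
  qed
  define Tp where "Tp = {s\<in>S. 0 < u \<bullet> rvec s}"
  define R where "R s = (\<Sum>b\<in>B. \<bar>real_of_int (\<alpha> s b)\<bar>) +
      (\<Sum>r\<in>P. \<bar>real_of_int (pairing s (d r))\<bar> + \<bar>real_of_int (pairing s (c r))\<bar>)" for s
  have R0: "0 \<le> R s" for s unfolding R_def by (intro add_nonneg_nonneg sum_nonneg) auto
  define N where "N = (\<Sum>s\<in>Tp. R s / (u \<bullet> rvec s))"
  define y where "y b = \<lfloor>N * t b\<rfloor>" for b
  define m where "m = (\<Sum>b\<in>B - P. y b *s d b)"
  define e1 where "e1 r = m - d r" for r
  define e2 where "e2 r = m - d r - c r" for r
  have pm: "pairing s m = (\<Sum>b\<in>B - P. y b * \<alpha> s b)" for s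
    by (simp add: m_def pairing_sum2 pairing_smult2 coord)
  have key: "real_of_int (pairing s m) \<ge> \<bar>real_of_int (pairing s (d r))\<bar> + \<bar>real_of_int (pairing s (c r))\<bar>"
    if s: "s \<in> Tp" and r: "r \<in> P" for s r
  proof -
    have us: "0 < u \<bullet> rvec s" using s by (simp add: Tp_def)
    have finT: "finite Tp" using fin by (simp add: Tp_def)
    have "R s / (u \<bullet> rvec s) \<le> N"
      unfolding N_def by (rule member_le_sum) (use s finT R0 us Tp_def in auto)
    then have RN: "R s \<le> N * (u \<bullet> rvec s)" using us by (simp add: divide_le_eq)
    have "N * (u \<bullet> rvec s) = (\<Sum>b\<in>B. real_of_int (\<alpha> s b) * (N * t b))"
      by (simp add: uexp sum_distrib_left algebra_simps)
    also have "\<dots> = (\<Sum>b\<in>B - P. real_of_int (\<alpha> s b) * (N * t b))"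
      by (rule sum.mono_neutral_right) (use finB tP in auto)
    finally have Nu: "N * (u \<bullet> rvec s) = (\<Sum>b\<in>B - P. real_of_int (\<alpha> s b) * (N * t b))" .
    have "(\<Sum>b\<in>B - P. real_of_int (\<alpha> s b) * (N * t b)) - (\<Sum>b\<in>B - P. \<bar>real_of_int (\<alpha> s b)\<bar>)
        \<le> (\<Sum>b\<in>B - P. real_of_int (y b * \<alpha> s b))"
    proof -
      have "real_of_int (\<alpha> s b) * (N * t b) - \<bar>real_of_int (\<alpha> s b)\<bar> \<le> real_of_int (y b * \<alpha> s b)" for b
      proof -
        have f: "\<bar>real_of_int (y b) - N * t b\<bar> \<le> 1" unfolding y_def
          by (smt (verit) of_int_floor_le real_of_int_floor_add_one_gt)
        have "\<bar>real_of_int (\<alpha> s b) * (real_of_int (y b) - N * t b)\<bar> \<le> \<bar>real_of_int (\<alpha> s b)\<bar>"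
          using f by (simp add: abs_mult mult_left_le)
        then show ?thesis by (simp add: algebra_simps abs_le_iff)
      qed
      then show ?thesis by (simp add: sum_subtractf[symmetric] sum_mono del: of_int_mult)
    qed
    also have "\<dots> = real_of_int (pairing s m)" by (simp add: pm)
    finally have A: "N * (u \<bullet> rvec s) - (\<Sum>b\<in>B - P. \<bar>real_of_int (\<alpha> s b)\<bar>) \<le> real_of_int (pairing s m)"
      using Nu by simp
    have B1: "(\<Sum>b\<in>B - P. \<bar>real_of_int (\<alpha> s b)\<bar>) \<le> (\<Sum>b\<in>B. \<bar>real_of_int (\<alpha> s b)\<bar>)"
      by (rule sum_mono2) (use finB in auto)
    have B2: "\<bar>real_of_int (pairing s (d r))\<bar> + \<bar>real_of_int (pairing s (c r))\<bar> \<le>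
        (\<Sum>r\<in>P. \<bar>real_of_int (pairing s (d r))\<bar> + \<bar>real_of_int (pairing s (c r))\<bar>)"
      by (rule member_le_sum) (use r finP in auto)
    show ?thesis using A B1 B2 RN unfolding R_def by linarith
  qed
  have ps_c: "pairing s (c r) = 0" if "s \<in> P" "r \<in> P" for s r
  proof -
    have "rvec s \<in> \<tau>" using ray_in that(1) by (simp add: P_def)
    then have "rvec s \<bullet> rvec (c r) = 0" using assms(6) that(2) by (auto simp: P_def perp_lattice_def)
    then show ?thesis by (simp add: inner_rvec)
  qed
  have ps_m: "pairing s m = 0" if "s \<in> P" for s
  proof -
    have "pairing s m = (\<Sum>b\<in>B - P. y b * pairing s (d b))" by (simp add: pm coord)
    also have "\<dots> = 0" by (rule sum.neutral) (use that PB d in \<open>auto split: if_splits\<close>)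
    finally show ?thesis .
  qed
  have compat: "pairing s (e1 r) = (if s = r then -1 else 0) \<and> pairing s (e2 r) = (if s = r then -1 else 0)"
    if "r \<in> P" "s \<in> P" for r s
    using that subsetD[OF PB that(1)] subsetD[OF PB that(2)] ps_c[OF that(2,1)] ps_m[OF that(2)] d[of r s] PB
    by (auto simp: e1_def e2_def pairing_diff2)
  have pos1: "\<forall>s\<in>S. 0 < u \<bullet> rvec s \<longrightarrow> 0 \<le> pairing s (e1 r)" if "r \<in> P" for r
  proof (intro ballI impI)
    fix s assume "s \<in> S" "0 < u \<bullet> rvec s"
    then have "s \<in> Tp" by (simp add: Tp_def)
    from key[OF this that] show "0 \<le> pairing s (e1 r)" by (simp add: e1_def pairing_diff2)
  qed
  have pos2: "\<forall>s\<in>S. 0 < u \<bullet> rvec s \<longrightarrow> 0 \<le> pairing s (e2 r)" if "r \<in> P" for r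
  proof (intro ballI impI)
    fix s assume "s \<in> S" "0 < u \<bullet> rvec s"
    then have "s \<in> Tp" by (simp add: Tp_def)
    from key[OF this that] show "0 \<le> pairing s (e2 r)" by (simp add: e2_def pairing_diff2)
  qed
  have dem: "demazure_root \<sigma> r e" if r: "r \<in> P" and er: "pairing r e = -1"
    and ep: "\<forall>s\<in>S. 0 < u \<bullet> rvec s \<longrightarrow> 0 \<le> pairing s e"
    and eP: "\<forall>s\<in>P. s \<noteq> r \<longrightarrow> pairing s e = 0" for r e
    unfolding demazure_root_def
  proof (intro conjI ballI impI)
    show "r \<in> ray_gens \<sigma>" using ray_sub[OF T] r by (auto simp: P_def)
    show "pairing r e = -1" by fact
    fix q assume q: "q \<in> ray_gens \<sigma>" and qr: "q \<noteq> r"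
    show "0 \<le> pairing q e"
    proof (cases "q \<in> P")
      case True then show ?thesis using eP qr by simp
    next
      case False
      then have "rvec q \<notin> \<tau>" using ray_back[OF cc T q] by (auto simp: P_def)
      then show ?thesis using nonneg_on_rays[OF fin sig pos tau T ep q] by simp
    qed
  qed
  have A1: "demazure_root \<sigma> r (e1 r) \<and> demazure_root \<sigma> r (e2 r) \<and> e1 r - e2 r = c r"
    if r: "r \<in> ray_gens \<tau>" for r
  proof -
    have rP: "r \<in> P" using r by (simp add: P_def)
    have "demazure_root \<sigma> r (e1 r)"
      by (rule dem[OF rP _ pos1[OF rP]]) (use compat[OF rP] rP in auto)
    moreover have "demazure_root \<sigma> r (e2 r)"
      by (rule dem[OF rP _ pos2[OF rP]]) (use compat[OF rP] rP in auto)
    moreover have "e1 r - e2 r = c r" by (simp add: e1_def e2_def)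
    ultimately show ?thesis by blast
  qed
  show ?thesis
    by (rule exI[of _ e1], rule exI[of _ e2]) (use A1 compat in \<open>auto simp: P_def\<close>)
qed

end
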